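(* The polynomials $f^*(n,q)$ satisfy: (a) for each $n\ge2$, $f^*(n,q)$ has degree $2n-4$ in $q$ and leading coefficient $1$; (b) for any integers $3\le n<n'$, we have $f^*(n,q)<_{\mathrm{lex}}f^*(n',q)$, and the first position at which the coefficient sequences of $f^*(n,q)$ and $f^*(n',q)$ differ is the $n$-th entry (the term of $n$-th highest order), where the two entries differ by exactly $1$.
   Context: For a polynomial $\phi$ defined on $\{-1,\dots,n-1\}$ (as a function of the integer argument) with $\phi(-1)=0$, $n\ge1$ and $-1\le k\le\frac{n-1}{2}$, let $u(\phi,n,q,k)=q^{2k+2}\phi(n-k-1)+\phi(k)+\bigl(\sum_{i=0}^kq^i\bigr)\bigl(\sum_{j=k}^{n-2}q^j\bigr)$. For $n\ge1$ let $k^*(n)=n-2^{\lfloor\log_2 n\rfloor}$ (the unique $0\le k\le\frac{n-1}{2}$ with $n-k$ a power of two). Define polynomials in $q$: $f^*(-1,q)=f^*(0,q)=f^*(1,q)=0$, $f^*(2,q)=1$, $f^*(3,q)=q^2+1$, $f^*(4,q)=q^4+2q^2+q+1$, and recursively $f^*(n,q)=u(f^*(\cdot,q),n,q,k^*(n))$ for $n\ge5$. The coefficient sequence of a nonzero polynomial lists its coefficients starting with the leading coefficient in order of decreasing power, followed by infinitely many zeros. For polynomials $g,h$ with coefficient sequences $(a_i)$, $(b_i)$, $g<_{\mathrm{lex}}h$ means there is $i\ge1$ with $a_i<b_i$ and $a_j=b_j$ for all $j<i$. *)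

theory Defs
  imports Complex_Main "HOL-Computational_Algebra.Polynomial"
begin

text \<open>The paper's operator u, for phi defined on integers (phi(-1)=0 handled by the caller),
  with q the polynomial indeterminate.\<close>
definition u :: "(int \<Rightarrow> int poly) \<Rightarrow> int \<Rightarrow> int \<Rightarrow> int poly" where
  "u phi n k = monom 1 (nat (2*k+2)) * phi (n-k-1) + phi k
      + (\<Sum>i\<in>{0..k}. monom 1 (nat i)) * (\<Sum>j\<in>{k..n-2}. monom 1 (nat j))"

definition kstar :: "nat \<Rightarrow> nat" where
  "kstar n = n - 2 ^ nat \<lfloor>log 2 (real n)\<rfloor>"

function fstar :: "nat \<Rightarrow> int poly" where
  "fstar n = (if n \<le> 1 then 0
     else if n = 2 then 1
     else if n = 3 then monom 1 2 + 1
     else if n = 4 then monom 1 4 + monom 2 2 + monom 1 1 + 1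
     else (let k = kstar n in
        monom 1 (2*k+2) * fstar (n-k-1) + fstar k
        + (\<Sum>i\<in>{0..k}. monom 1 i) * (\<Sum>j\<in>{k..n-2}. monom 1 j)))"
  by auto
termination
proof (relation "measure id")
  fix n k :: nat
  assume "\<not> n \<le> 1" "n \<noteq> 2" "n \<noteq> 3" "n \<noteq> 4" "k = kstar n"
  moreover have "(1::nat) \<le> 2 ^ nat \<lfloor>log 2 (real n)\<rfloor>" by simp
  ultimately show "(n - k - 1, n) \<in> measure id" "(k, n) \<in> measure id"
    unfolding kstar_def by auto
qed auto

text \<open>Coefficient sequence a_1, a_2, ... (index from 1): leading coefficient first,
  then decreasing powers, then zeros.\<close>
definition coeff_seq :: "int poly \<Rightarrow> nat \<Rightarrow> int" where
  "coeff_seq p i = (if 1 \<le> i \<and> i \<le> degree p + 1 then coeff p (degree p + 1 - i) else 0)"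

definition lex_less :: "int poly \<Rightarrow> int poly \<Rightarrow> bool" where
  "lex_less g h = (\<exists>i\<ge>1. coeff_seq g i < coeff_seq h i \<and>
                      (\<forall>j. 1 \<le> j \<and> j < i \<longrightarrow> coeff_seq g j = coeff_seq h j))"

end

theory Submission
  imports Defs
begin

declare fstar.simps[simp del]

definition S :: "nat \<Rightarrow> int poly" where "S a = (\<Sum>i\<in>{0..a}. monom 1 i)"
definition c :: "int poly \<Rightarrow> int \<Rightarrow> int" where "c p x = (if x < 0 then 0 else coeff p (nat x))"
definition cnt :: "int \<Rightarrow> int \<Rightarrow> int \<Rightarrow> int" where
  "cnt a b x = max 0 (min a x - max 0 (x - b) + 1)"

lemma kstar_eq: assumes "2^m \<le> n" "n < 2^(m+1)" shows "kstar n = n - 2^m"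
proof -
  have "n > 0" using assms(1) by (metis less_le_trans nat_zero_less_power_iff zero_less_numeral)
  hence "floor (log (real 2) (real n)) = int m"
    using floor_log_nat_eq_powr_iff[of 2 n m] assms by auto
  thus ?thesis unfolding kstar_def by simp
qed

lemma c_add[simp]: "c (p + q) x = c p x + c q x" by (simp add: c_def)
lemma c_0[simp]: "c 0 x = 0" by (simp add: c_def)
lemma c_monom_mult[simp]: "c (monom 1 a * p) x = c p (x - int a)"
  by (auto simp: c_def coeff_monom_mult nat_diff_distrib)
lemma c_S: "c (S a) x = (if 0 \<le> x \<and> x \<le> int a then 1 else 0)"
  by (auto simp: c_def S_def coeff_sum coeff_monom)

lemma S_Suc: "S (Suc a) = S a + monom 1 (Suc a)" by (simp add: S_def)
lemma S_0: "S 0 = 1" by (simp add: S_def one_poly_def monom_0)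

lemma c_SS: "c (S a * S b) x = cnt (int a) (int b) x"
proof (induction a arbitrary: x)
  case 0 thus ?case by (simp add: S_0 c_S cnt_def max_def min_def)
next
  case (Suc a)
  have "c (S (Suc a) * S b) x = c (S a * S b) x + c (S b) (x - int (Suc a))"
    by (simp add: S_Suc distrib_right)
  thus ?case using Suc by (simp add: c_S cnt_def max_def min_def)
qed

lemma sum_shift: "(\<Sum>j\<in>{k..h}. monom (1::int) j) = monom 1 k * S (h - k)" if "k \<le> h"
proof -
  have "(\<Sum>i\<in>{0..h-k}. monom (1::int) (i + k)) = (\<Sum>j\<in>{0+k..(h-k)+k}. monom 1 j)"
    by (rule sum.shift_bounds_cl_nat_ivl[symmetric])
  hence "(\<Sum>j\<in>{k..h}. monom (1::int) j) = (\<Sum>i\<in>{0..h-k}. monom 1 (i + k))"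
    using that by simp
  also have "\<dots> = monom 1 k * S (h - k)"
    by (simp add: S_def sum_distrib_left mult_monom add.commute)
  finally show ?thesis .
qed

lemma fstar_rec:
  assumes "5 \<le> n" "n = 2^m + k" "k < 2^m"
  shows "fstar n = monom 1 (2*k+2) * fstar (2^m - 1) + fstar k + S k * (monom 1 k * S (2^m - 2))"
proof -
  have m2: "m \<ge> 2"
  proof (rule ccontr)
    assume "\<not> m \<ge> 2" hence "m \<le> 1" by simp
    hence "(2::nat)^m \<le> 2" by (metis one_le_numeral power_increasing power_one_right)
    thus False using assms by simp
  qed
  have p4: "(4::nat) \<le> 2^m" using power_increasing[OF m2, of "2::nat"] by simp
  have ks: "kstar n = k" using kstar_eq[of m n] assms by auto
  have "fstar n = monom 1 (2*k+2) * fstar (n-k-1) + fstar k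
        + (\<Sum>i\<in>{0..k}. monom 1 i) * (\<Sum>j\<in>{k..n-2}. monom 1 j)"
    using assms(1) by (subst fstar.simps) (simp add: ks Let_def)
  also have "(\<Sum>j\<in>{k..n-2}. monom (1::int) j) = monom 1 k * S (n - 2 - k)"
    using assms p4 by (intro sum_shift) simp
  also have "n - 2 - k = 2^m - 2" using assms by auto
  also have "n - k - 1 = 2^m - 1" using assms by auto
  finally show ?thesis by (simp add: S_def)
qed

lemma c_1[simp]: "c 1 x = (if x = 0 then 1 else 0)" by (simp add: c_def coeff_1)
lemma c_monom[simp]: "c (monom a k) x = (if x = int k then a else 0)" by (auto simp: c_def coeff_monom)

lemma f0: "fstar 0 = 0" by (subst fstar.simps) simp
lemma f1: "fstar 1 = 0" by (subst fstar.simps) simp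
lemma f2: "fstar 2 = 1" by (subst fstar.simps) simp
lemma f3: "fstar 3 = monom 1 2 + 1" by (subst fstar.simps) simp
lemma f4: "fstar 4 = monom 1 4 + monom 2 2 + monom 1 1 + 1" by (subst fstar.simps) simp

lemma ex_log: "1 \<le> (n::nat) \<Longrightarrow> \<exists>m. 2^m \<le> n \<and> n < 2^(m+1)"
proof (induction n rule: nat_induct_at_least)
  case base show ?case by (rule exI[of _ 0]) simp
next
  case (Suc n)
  then obtain m where m: "2^m \<le> n" "n < 2^(m+1)" by blast
  show ?case
  proof (cases "Suc n = 2^(m+1)")
    case True thus ?thesis by (intro exI[of _ "m+1"]) simp
  next
    case False thus ?thesis using m by (intro exI[of _ m]) simp
  qed
qed

lemma c_rec:
  assumes "5 \<le> n" "n = 2^m + k" "k < 2^m"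
  shows "c (fstar n) x = c (fstar (2^m - 1)) (x - (2*int k+2)) + c (fstar k) x
           + cnt (int k) (int (2^m) - 2) (x - int k)"
proof -
  have m2: "m \<ge> 2"
  proof (rule ccontr)
    assume "\<not> m \<ge> 2" hence "m \<le> 1" by simp
    hence "(2::nat)^m \<le> 2" by (metis one_le_numeral power_increasing power_one_right)
    thus False using assms by simp
  qed
  have p4: "(4::nat) \<le> 2^m" using power_increasing[OF m2, of "2::nat"] by simp
  have e: "S k * (monom 1 k * S (2^m - 2)) = monom 1 k * (S k * S (2^m - 2))" by (simp add: ac_simps)
  have "int (2^m - 2) = int (2^m) - 2" using p4 by simp
  thus ?thesis using fstar_rec[OF assms] by (simp add: e c_SS add.commute)
qed

lemma fdeg: "(\<forall>x. x > 2 * int n - 4 \<longrightarrow> c (fstar n) x = 0) \<and> (2 \<le> n \<longrightarrow> c (fstar n) (2 * int n - 4) = 1)"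
proof (induction n rule: less_induct)
  case (less n)
  show ?case
  proof (cases "n \<le> 4")
    case True
    hence "n = 0 \<or> n = 1 \<or> n = 2 \<or> n = 3 \<or> n = 4" by auto
    thus ?thesis by (elim disjE) (auto simp: f0 f1 f1[simplified] f2 f3 f4)
  next
    case False
    then obtain m where m: "2^m \<le> n" "n < 2^(m+1)" using ex_log[of n] by auto
    define k where "k = n - 2^m"
    have nk: "n = 2^m + k" "k < 2^m" using m by (auto simp: k_def)
    have m2: "m \<ge> 2"
    proof (rule ccontr)
      assume "\<not> m \<ge> 2" hence "m \<le> 1" by simp
      hence "(2::nat)^m \<le> 2" by (metis one_le_numeral power_increasing power_one_right)
      thus False using False nk by simp
    qed
    have p4: "(4::nat) \<le> 2^m" using power_increasing[OF m2, of "2::nat"] by simp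
    define N where "N = int (2^m)"
    have N4: "N \<ge> 4" using p4 unfolding N_def by linarith
    have nN: "int n = N + int k" "int k < N" using nk unfolding N_def by auto
    have M: "int (2^m - 1) = N - 1" using p4 unfolding N_def by simp
    have lt: "2^m - 1 < n" "k < n" "2 \<le> (2::nat)^m - 1" using nk p4 by auto
    have IHM: "\<forall>x. x > 2 * (N - 1) - 4 \<longrightarrow> c (fstar (2^m - 1)) x = 0"
              "c (fstar (2^m - 1)) (2 * (N - 1) - 4) = 1"
      using less.IH[OF lt(1)] lt(3) unfolding M by auto
    have IHk: "\<forall>x. x > 2 * int k - 4 \<longrightarrow> c (fstar k) x = 0"
      using less.IH[OF lt(2)] by auto
    have rec: "\<And>x. c (fstar n) x = c (fstar (2^m - 1)) (x - (2*int k+2)) + c (fstar k) x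
           + cnt (int k) (N - 2) (x - int k)"
      using c_rec[of n m k] False nk unfolding N_def by auto
    show ?thesis
    proof (intro conjI allI impI)
      fix x assume "2 * int n - 4 < x"
      thus "c (fstar n) x = 0" unfolding rec using IHM(1) IHk nN N4
        by (auto simp: cnt_def)
    next
      show "c (fstar n) (2 * int n - 4) = 1" unfolding rec using IHM IHk nN N4
        by (auto simp: cnt_def)
    qed
  qed
qed

lemma fzero: "x > 2 * int n - 4 \<Longrightarrow> c (fstar n) x = 0" using fdeg by blast

lemma cnt_L1: "N \<ge> 4 \<Longrightarrow> 0 \<le> t \<Longrightarrow> t \<le> N - 2 \<Longrightarrow> cnt 0 (N-2) (2*N - 4 - t) = (if t = N - 2 then 1 else 0)"
  unfolding cnt_def by (simp add: max_def min_def)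
lemma cnt_L2: "N \<ge> 4 \<Longrightarrow> 0 \<le> t \<Longrightarrow> 0 \<le> k \<Longrightarrow> k + 1 < N \<Longrightarrow> t \<le> N + k - 1 \<Longrightarrow>
   cnt (k+1) (N-2) (2*(N+k) - 2 - t - (k+1)) = cnt k (N-2) (2*(N+k)-4-t-k) + (if t = N + k - 1 then 1 else 0)"
  unfolding cnt_def by (simp add: max_def min_def)

lemma fstep:
  assumes "3 \<le> n" "0 \<le> t" "t \<le> int n - 1"
  shows "c (fstar (n+1)) (2 * int n - 2 - t) = c (fstar n) (2 * int n - 4 - t) + (if t = int n - 1 then 1 else 0)"
proof -
  consider "n = 3" | "n = 4" | "n \<ge> 5" using assms by linarith
  thus ?thesis
  proof cases
    case 1
    hence "t = 0 \<or> t = 1 \<or> t = 2" using assms by auto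
    thus ?thesis using 1 by (elim disjE) (simp_all add: f3 f4)
  next
    case 2
    have r: "c (fstar 5) x = c (fstar 3) (x - 4) + c (fstar 1) x + cnt 1 2 (x - 1)" for x
    proof -
      have "c (fstar 5) x = c (fstar (2^2-1)) (x - (2*int 1+2)) + c (fstar 1) x + cnt (int 1) (int (2^2) - 2) (x - int 1)"
        by (rule c_rec) simp_all
      thus ?thesis by simp
    qed
    have "t = 0 \<or> t = 1 \<or> t = 2 \<or> t = 3" using assms 2 by auto
    thus ?thesis using 2 by (elim disjE) (simp_all add: r f3 f4 f1 f1[simplified] cnt_def)
  next
    case 3
    then obtain m where m: "2^m \<le> n+1" "n+1 < 2^(m+1)" using ex_log[of "n+1"] by auto
    define k' where "k' = n + 1 - 2^m"
    have nk: "n + 1 = 2^m + k'" "k' < 2^m" using m by (auto simp: k'_def)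
    have m2: "m \<ge> 2"
    proof (rule ccontr)
      assume "\<not> m \<ge> 2" hence "m \<le> 1" by simp
      hence "(2::nat)^m \<le> 2" by (metis one_le_numeral power_increasing power_one_right)
      thus False using 3 nk by simp
    qed
    have p4: "(4::nat) \<le> 2^m" using power_increasing[OF m2, of "2::nat"] by simp
    define N where "N = int (2^m)"
    have N4: "N \<ge> 4" using p4 unfolding N_def by linarith
    show ?thesis
    proof (cases "k' = 0")
      case True
      have "int (n+1) = N" using nk True unfolding N_def by (metis add_0_right)
      hence nN: "int n = N - 1" by simp
      have nM: "2^m - 1 = n" using nk True by simp
      have r: "c (fstar (n+1)) x = c (fstar n) (x - 2) + c (fstar 0) x + cnt 0 (N - 2) x" for x
      proof -
        have "c (fstar (n+1)) x = c (fstar (2^m - 1)) (x - (2*int 0+2)) + c (fstar 0) x + cnt (int 0) (int (2^m) - 2) (x - int 0)"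
          by (rule c_rec) (use 3 nk True in auto)
        thus ?thesis unfolding nM N_def by simp
      qed
      have e1: "2 * int n - 2 - t - 2 = 2 * int n - 4 - t" by simp
      have e2: "cnt 0 (N - 2) (2 * int n - 2 - t) = (if t = int n - 1 then 1 else 0)"
        using cnt_L1[of N t] N4 assms unfolding nN by simp
      show ?thesis unfolding r e1 e2 f0 by simp
    next
      case False
      define k where "k = k' - 1"
      have nk2: "n = 2^m + k" "k + 1 < 2^m" using nk False by (auto simp: k_def)
      have "int (k + 1) < int (2^m)" using nk2(2) by (simp only: of_nat_less_iff)
      hence nN: "int n = N + int k" "int k + 1 < N" using nk2 unfolding N_def by auto
      have r1: "c (fstar (n+1)) x = c (fstar (2^m - 1)) (x - (2*int (k+1)+2)) + c (fstar (k+1)) x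
           + cnt (int (k+1)) (N - 2) (x - int (k+1))" for x
        unfolding N_def by (rule c_rec) (use 3 nk2 in auto)
      have r0: "c (fstar n) x = c (fstar (2^m - 1)) (x - (2*int k+2)) + c (fstar k) x
           + cnt (int k) (N - 2) (x - int k)" for x
        unfolding N_def by (rule c_rec) (use 3 nk2 in auto)
      have z1: "c (fstar (k+1)) (2 * int n - 2 - t) = 0"
      proof (rule fzero)
        have "int (k+1) = int k + 1" by simp
        thus "2 * int (k + 1) - 4 < 2 * int n - 2 - t" using nN assms by (simp add: algebra_simps)
      qed
      have z0: "c (fstar k) (2 * int n - 4 - t) = 0"
        by (rule fzero) (use nN assms in \<open>simp add: algebra_simps\<close>)
      have a: "2 * int n - 2 - t - (2 * int (k + 1) + 2) = 2 * int n - 4 - t - (2 * int k + 2)" by simp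
      have e2: "cnt (int (k+1)) (N - 2) (2 * int n - 2 - t - int (k+1)) = cnt (int k) (N-2) (2 * int n - 4 - t - int k) + (if t = int n - 1 then 1 else 0)"
      proof -
        have a1: "2 * int n - 2 - t - int (k+1) = 2*(N+int k) - 2 - t - (int k+1)" using nN by simp
        have a2: "2 * int n - 4 - t - int k = 2*(N+int k)-4-t-int k" using nN by simp
        have a3: "int (k+1) = int k + 1" by simp
        have a4: "(t = int n - 1) = (t = N + int k - 1)" using nN by simp
        show ?thesis unfolding a1 a2 unfolding a3 a4 by (rule cnt_L2) (use N4 assms nN in auto)
      qed
      show ?thesis unfolding r1 r0 z1 z0 a e2 by simp
    qed
  qed
qed

lemma chain:
  assumes "n < n'" "3 \<le> n" "0 \<le> t" "t \<le> int n - 1"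
  shows "c (fstar n') (2 * int n' - 4 - t) = c (fstar n) (2 * int n - 4 - t) + (if t = int n - 1 then 1 else 0)"
proof -
  have "Suc n \<le> n'" using assms by simp
  thus ?thesis
  proof (induction n' rule: dec_induct)
    case base
    show ?case using fstep[OF assms(2-4)] by (simp add: algebra_simps)
  next
    case (step m)
    have "c (fstar (m+1)) (2 * int m - 2 - t) = c (fstar m) (2 * int m - 4 - t) + (if t = int m - 1 then 1 else 0)"
      by (rule fstep) (use step.hyps assms in auto)
    moreover have "t \<noteq> int m - 1" using step.hyps assms by auto
    moreover have "2 * int (Suc m) - 4 - t = 2 * int m - 2 - t" by simp
    ultimately show ?case using step.IH by simp
  qed
qed

lemma c_nat: "c p (int i) = coeff p i" by (simp add: c_def)

lemma fdeg2: assumes "2 \<le> n" shows "degree (fstar n) = 2*n - 4" "lead_coeff (fstar n) = 1"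
proof -
  have z: "coeff (fstar n) i = 0" if "i > 2*n - 4" for i
    using fzero[of n "int i"] that assms by (simp add: c_nat)
  have o: "coeff (fstar n) (2*n - 4) = 1"
  proof -
    have "int (2*n - 4) = 2 * int n - 4" using assms by simp
    thus ?thesis using fdeg[of n] assms by (metis c_nat)
  qed
  have "degree (fstar n) \<le> 2*n - 4" using z by (intro degree_le) auto
  moreover have "2*n - 4 \<le> degree (fstar n)" using o by (intro le_degree) simp
  ultimately show d: "degree (fstar n) = 2*n - 4" by simp
  show "lead_coeff (fstar n) = 1" unfolding d by (rule o)
qed

lemma cs: assumes "3 \<le> n" "1 \<le> j" "j \<le> n"
  shows "coeff_seq (fstar n) j = c (fstar n) (2 * int n - 4 - (int j - 1))"
proof -
  have d: "degree (fstar n) = 2*n - 4" using fdeg2 assms by auto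
  have i: "int (2*n - 4 + 1 - j) = 2 * int n - 4 - (int j - 1)" using assms by simp
  have "coeff_seq (fstar n) j = coeff (fstar n) (2*n - 4 + 1 - j)"
    unfolding coeff_seq_def d using assms by simp
  also have "\<dots> = c (fstar n) (int (2*n - 4 + 1 - j))" by (rule c_nat[symmetric])
  finally show ?thesis unfolding i .
qed

theorem lemma3p40:
  shows "(\<forall>n::nat. 2 \<le> n \<longrightarrow> degree (fstar n) = 2*n - 4 \<and> lead_coeff (fstar n) = 1)
     \<and> (\<forall>n n'::nat. 3 \<le> n \<and> n < n' \<longrightarrow>
          lex_less (fstar n) (fstar n')
          \<and> (\<forall>j. 1 \<le> j \<and> j < n \<longrightarrow> coeff_seq (fstar n) j = coeff_seq (fstar n') j)
          \<and> coeff_seq (fstar n) n \<noteq> coeff_seq (fstar n') n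
          \<and> \<bar>coeff_seq (fstar n') n - coeff_seq (fstar n) n\<bar> = 1)"
proof (intro conjI allI impI)
  fix n :: nat assume "2 \<le> n"
  thus "degree (fstar n) = 2*n - 4" "lead_coeff (fstar n) = 1" using fdeg2 by auto
next
  fix n n' :: nat assume a: "3 \<le> n \<and> n < n'"
  have E: "coeff_seq (fstar n') j = coeff_seq (fstar n) j + (if j = n then 1 else 0)"
    if "1 \<le> j" "j \<le> n" for j
  proof -
    have "coeff_seq (fstar n') j = c (fstar n') (2 * int n' - 4 - (int j - 1))"
      using cs[of n' j] a that by auto
    also have "\<dots> = c (fstar n) (2 * int n - 4 - (int j - 1)) + (if int j - 1 = int n - 1 then 1 else 0)"
      by (rule chain) (use a that in auto)
    also have "\<dots> = coeff_seq (fstar n) j + (if j = n then 1 else 0)"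
      using cs[of n j] a that by auto
    finally show ?thesis .
  qed
  have En: "coeff_seq (fstar n') n = coeff_seq (fstar n) n + 1" using E[of n] a by simp
  have Ej: "\<forall>j. 1 \<le> j \<and> j < n \<longrightarrow> coeff_seq (fstar n) j = coeff_seq (fstar n') j"
    using E by auto
  show "coeff_seq (fstar n) n \<noteq> coeff_seq (fstar n') n" using En by simp
  show "\<bar>coeff_seq (fstar n') n - coeff_seq (fstar n) n\<bar> = 1" using En by simp
  show "lex_less (fstar n) (fstar n')"
    unfolding lex_less_def using En Ej a by (intro exI[of _ n]) auto
  fix j assume "1 \<le> j \<and> j < n"
  thus "coeff_seq (fstar n) j = coeff_seq (fstar n') j" using Ej by blast
qed

end
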